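(* Let $M>0$, $T\ge 1/M$, $y_0\in C^4([0,1])$. For $\varepsilon\in(0,1)$ let $y^\varepsilon$ be the solution of $y^\varepsilon_t-\varepsilon y^\varepsilon_{xx}+My^\varepsilon_x=0$ in $(0,1)\times(0,T)$, $y^\varepsilon(0,t)=0$, $y^\varepsilon(1,t)=0$ for $t\in(0,T)$, $y^\varepsilon(x,0)=y_0(x)$ for $x\in(0,1)$. Then there exist constants $C>0$, $C'>0$ and $\varepsilon_0>0$, independent of $\varepsilon$, such that for all $0<\varepsilon<\varepsilon_0$, $$\Big\|y^\varepsilon\Big(\cdot,\frac1M\Big)\Big\|_{L^2(0,1)}\le C\big(|y_0(0)|\varepsilon^{1/4}+|y_0'(0)|\varepsilon^{3/4}+|y_0''(0)|\varepsilon^{5/4}\big)+C'\varepsilon^{3/2}.$$ *)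

theory Defs
  imports "HOL-Analysis.Analysis"
begin

definition C4_on_unit :: "(real \<Rightarrow> real) \<Rightarrow> (nat \<Rightarrow> real \<Rightarrow> real) \<Rightarrow> bool" where
  "C4_on_unit y0 D \<longleftrightarrow>
     (\<forall>x\<in>{0..1}. D 0 x = y0 x) \<and>
     (\<forall>k<4. \<forall>x\<in>{0..1}. (D k has_real_derivative D (Suc k) x) (at x within {0..1})) \<and>
     continuous_on {0..1} (D 4)"

text \<open>The solution is continuous on the closed rectangle except possibly at the two
  corners (0,0), (1,0) (no compatibility conditions are assumed on y0).\<close>
definition adv_diff_solution ::
  "real \<Rightarrow> real \<Rightarrow> real \<Rightarrow> (real \<Rightarrow> real) \<Rightarrow> (real \<Rightarrow> real \<Rightarrow> real) \<Rightarrow> bool" where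
  "adv_diff_solution M T eps y0 y \<longleftrightarrow>
     (\<exists>yt yx yxx :: real \<Rightarrow> real \<Rightarrow> real.
        (\<forall>x\<in>{0<..<1}. \<forall>t\<in>{0<..<T}.
           ((\<lambda>s. y x s) has_real_derivative yt x t) (at t) \<and>
           ((\<lambda>z. y z t) has_real_derivative yx x t) (at x) \<and>
           ((\<lambda>z. yx z t) has_real_derivative yxx x t) (at x) \<and>
           yt x t - eps * yxx x t + M * yx x t = 0) \<and>
        continuous_on ({0<..<1} \<times> {0<..<T}) (\<lambda>(x, t). yt x t) \<and>
        continuous_on ({0<..<1} \<times> {0<..<T}) (\<lambda>(x, t). yxx x t)) \<and>
     continuous_on ({0..1} \<times> {0..T} - {(0, 0), (1, 0)}) (\<lambda>(x, t). y x t) \<and>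
     bounded ((\<lambda>(x, t). y x t) ` ({0..1} \<times> {0..T})) \<and>
     (\<forall>t\<in>{0<..<T}. y 0 t = 0 \<and> y 1 t = 0) \<and>
     (\<forall>x\<in>{0<..<1}. y x 0 = y0 x)"

definition L2_norm_unit :: "(real \<Rightarrow> real) \<Rightarrow> real" where
  "L2_norm_unit f = sqrt (integral {0..1} (\<lambda>x. (f x)\<^sup>2))"

end

theory Submission
  imports Defs
begin


lemma mono_aux:
  fixes f f' :: "real \<Rightarrow> real"
  assumes "continuous_on {0..1} f"
    and "\<And>x. x\<in>{0<..<1} \<Longrightarrow> (f has_real_derivative f' x) (at x)"
    and "\<And>x. x\<in>{0<..<1} \<Longrightarrow> f' x \<le> 0"
    and "x \<in> {0..1}"
  shows "f x \<le> f 0"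
proof -
  have "f 0 \<ge> f x"
  proof (rule DERIV_nonpos_imp_decreasing_open[of 0 x f])
    show "0 \<le> x" using assms(4) by auto
    show "\<exists>y. (f has_real_derivative y) (at z) \<and> y \<le> 0" if "0 < z" "z < x" for z
      using assms(2,3)[of z] that assms(4) by auto
    show "continuous_on {0..x} f" using assms(1) by (rule continuous_on_subset) (use assms(4) in auto)
  qed
  then show ?thesis by simp
qed

lemma taylor3:
  assumes "C4_on_unit y0 D"
  shows "\<exists>K\<ge>0. \<forall>x\<in>{0..1}. \<bar>y0 x\<bar> \<le> \<bar>y0 0\<bar> + \<bar>D 1 0\<bar> * x + \<bar>D 2 0\<bar> * x^2/2 + K * x^3/6"
proof -
  have D0: "\<And>x. x\<in>{0..1} \<Longrightarrow> D 0 x = y0 x"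
   and der: "\<And>k x. k < 4 \<Longrightarrow> x\<in>{0..1} \<Longrightarrow> (D k has_real_derivative D (Suc k) x) (at x within {0..1})"
    using assms unfolding C4_on_unit_def by auto
  have cont: "continuous_on {0..1} (D k)" if "k < 4" for k
    by (rule DERIV_continuous_on) (rule der[OF that])
  have derat: "(D k has_real_derivative D (Suc k) x) (at x)" if "k < 4" "x\<in>{0<..<1}" for k x
    using der[OF that(1), of x] that(2) at_within_Icc_at[of 0 x 1] by auto
  obtain K where K: "\<And>x. x\<in>{0..1} \<Longrightarrow> \<bar>D 3 x\<bar> \<le> K"
    using compact_imp_bounded[OF compact_continuous_image[OF cont[of 3] compact_Icc]]
    unfolding bounded_iff by fastforce
  have K0: "K \<ge> 0" using K[of 0] by auto
  have K3: "D 3 x - K \<le> 0" "- D 3 x - K \<le> 0" if "x \<in> {0<..<1}" for x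
    using K[of x] that by (auto simp: abs_le_iff)
  define a0 a1 a2 where "a0 = D 0 0" "a1 = D 1 0" "a2 = D 2 0"
  have y00: "y0 0 = a0" using D0[of 0] a0_a1_a2_def by auto
  have main: "D 0 x - (a0 + a1 * x + a2 * x^2/2 + s * K * x^3/6) \<le> 0
      \<and> 0 \<le> D 0 x - (a0 + a1 * x + a2 * x^2/2 - s * K * x^3/6)"
    if x: "x\<in>{0..1}" and s: "s = 1" for x s
  proof
    define g2 where "g2 x = D 2 x - (a2 + K * x)" for x
    define g1 where "g1 x = D 1 x - (a1 + a2 * x + K * x^2/2)" for x
    define g0 where "g0 x = D 0 x - (a0 + a1 * x + a2 * x^2/2 + K * x^3/6)" for x
    have c2: "continuous_on {0..1} g2" unfolding g2_def by (intro continuous_intros cont) auto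
    have c1: "continuous_on {0..1} g1" unfolding g1_def by (intro continuous_intros cont) auto
    have c0: "continuous_on {0..1} g0" unfolding g0_def by (intro continuous_intros cont) auto
    have d2: "(g2 has_real_derivative (D 3 x - K)) (at x)" if "x\<in>{0<..<1}" for x
      unfolding g2_def using derat[OF _ that, of 2]
      by (auto intro!: derivative_eq_intros)
    have d1: "(g1 has_real_derivative g2 x) (at x)" if "x\<in>{0<..<1}" for x
      unfolding g1_def g2_def using derat[OF _ that, of 1]
      by (auto intro!: derivative_eq_intros simp: numeral_eq_Suc)
    have d0: "(g0 has_real_derivative g1 x) (at x)" if "x\<in>{0<..<1}" for x
      unfolding g0_def g1_def using derat[OF _ that, of 0]
      by (auto intro!: derivative_eq_intros simp: numeral_eq_Suc)
    have "g2 x \<le> g2 0" if "x\<in>{0..1}" for x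
      by (rule mono_aux[OF c2 d2 _ that]) (use K3 in auto)
    then have "g2 x \<le> 0" if "x\<in>{0..1}" for x using that by (auto simp: g2_def a0_a1_a2_def)
    then have "g1 x \<le> g1 0" if "x\<in>{0..1}" for x
      by (intro mono_aux[OF c1 d1 _ that]) auto
    then have "g1 x \<le> 0" if "x\<in>{0..1}" for x using that by (auto simp: g1_def a0_a1_a2_def)
    then have "g0 x \<le> g0 0" if "x\<in>{0..1}" for x
      by (intro mono_aux[OF c0 d0 _ that]) auto
    then have "g0 x \<le> 0" using x by (auto simp: g0_def a0_a1_a2_def)
    then show "D 0 x - (a0 + a1 * x + a2 * x^2/2 + s * K * x^3/6) \<le> 0" by (simp add: g0_def s)
  next
    define g2 where "g2 x = D 2 x - (a2 - K * x)" for x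
    define g1 where "g1 x = D 1 x - (a1 + a2 * x - K * x^2/2)" for x
    define g0 where "g0 x = D 0 x - (a0 + a1 * x + a2 * x^2/2 - K * x^3/6)" for x
    have c2: "continuous_on {0..1} g2" unfolding g2_def by (intro continuous_intros cont) auto
    have c1: "continuous_on {0..1} g1" unfolding g1_def by (intro continuous_intros cont) auto
    have c0: "continuous_on {0..1} g0" unfolding g0_def by (intro continuous_intros cont) auto
    have d2: "((\<lambda>x. - g2 x) has_real_derivative (- D 3 x - K)) (at x)" if "x\<in>{0<..<1}" for x
      unfolding g2_def using derat[OF _ that, of 2]
      by (auto intro!: derivative_eq_intros)
    have d1: "((\<lambda>x. - g1 x) has_real_derivative - g2 x) (at x)" if "x\<in>{0<..<1}" for x
      unfolding g1_def g2_def using derat[OF _ that, of 1]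
      by (auto intro!: derivative_eq_intros simp: numeral_eq_Suc)
    have d0: "((\<lambda>x. - g0 x) has_real_derivative - g1 x) (at x)" if "x\<in>{0<..<1}" for x
      unfolding g0_def g1_def using derat[OF _ that, of 0]
      by (auto intro!: derivative_eq_intros simp: numeral_eq_Suc)
    have "- g2 x \<le> - g2 0" if "x\<in>{0..1}" for x
      by (rule mono_aux[OF _ d2 _ that]) (use K3 c2 in \<open>auto intro!: continuous_intros\<close>)
    then have "g2 x \<ge> 0" if "x\<in>{0..1}" for x using that by (auto simp: g2_def a0_a1_a2_def)
    then have "- g1 x \<le> - g1 0" if "x\<in>{0..1}" for x
      by (intro mono_aux[OF _ d1 _ that]) (use c1 in \<open>auto intro!: continuous_intros\<close>)
    then have "g1 x \<ge> 0" if "x\<in>{0..1}" for x using that by (auto simp: g1_def a0_a1_a2_def)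
    then have "- g0 x \<le> - g0 0" if "x\<in>{0..1}" for x
      by (intro mono_aux[OF _ d0 _ that]) (use c0 in \<open>auto intro!: continuous_intros\<close>)
    then have "g0 x \<ge> 0" using x by (auto simp: g0_def a0_a1_a2_def)
    then show "0 \<le> D 0 x - (a0 + a1 * x + a2 * x^2/2 - s * K * x^3/6)" by (simp add: g0_def s)
  qed
  show ?thesis
  proof (intro exI[of _ K] conjI K0 ballI)
    fix x :: real assume x: "x \<in> {0..1}"
    have x0: "x \<ge> 0" using x by auto
    from main[OF x refl] D0[OF x] have
      A: "y0 x \<le> a0 + a1 * x + a2 * x^2/2 + K * x^3/6" and B: "y0 x \<ge> a0 + a1 * x + a2 * x^2/2 - K * x^3/6"
      by auto
    have "\<bar>a0 + a1 * x + a2 * x^2/2\<bar> \<le> \<bar>a0\<bar> + \<bar>a1\<bar> * x + \<bar>a2\<bar> * x^2/2"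
    proof -
      have "\<bar>a0 + a1 * x + a2 * x^2/2\<bar> \<le> \<bar>a0\<bar> + \<bar>a1 * x\<bar> + \<bar>a2 * x^2/2\<bar>" by linarith
      also have "\<dots> = \<bar>a0\<bar> + \<bar>a1\<bar> * x + \<bar>a2\<bar> * x^2/2" using x0 by (simp add: abs_mult)
      finally show ?thesis .
    qed
    moreover have "K * x^3/6 \<ge> 0" using K0 x0 by simp
    ultimately show "\<bar>y0 x\<bar> \<le> \<bar>y0 0\<bar> + \<bar>D 1 0\<bar> * x + \<bar>D 2 0\<bar> * x^2/2 + K * x^3/6"
      using A B y00 a0_a1_a2_def by (auto simp: abs_le_iff)
  qed
qed




lemma second_deriv_max:
  fixes f f' :: "real \<Rightarrow> real"
  assumes d: "0 < \<delta>" and der: "\<And>z. \<bar>z - x\<bar> < \<delta> \<Longrightarrow> (f has_real_derivative f' z) (at z)"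
    and der2: "(f' has_real_derivative f2) (at x)"
    and mx: "\<And>z. \<bar>z - x\<bar> < \<delta> \<Longrightarrow> f z \<le> f x"
  shows "f' x = 0 \<and> f2 \<le> 0"
proof
  show f0: "f' x = 0"
    by (rule DERIV_local_max[OF der[of x] d]) (use d mx in \<open>auto simp: abs_minus_commute\<close>)
  show "f2 \<le> 0"
  proof (rule ccontr)
    assume "\<not> f2 \<le> 0"
    then have "f2 > 0" by simp
    from DERIV_pos_inc_right[OF der2 this] obtain d' where d': "d' > 0" "\<And>h. h > 0 \<Longrightarrow> h < d' \<Longrightarrow> f' x < f' (x + h)"
      by auto
    define h where "h = min d' \<delta> / 2"
    have h: "0 < h" "h < d'" "h < \<delta>" using d d' by (auto simp: h_def)
    have "\<exists>l z. x < z \<and> z < x + h \<and> DERIV f z :> l \<and> f (x + h) - f x = (x + h - x) * l"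
    proof (rule MVT)
      show "x < x + h" using h by simp
      show "continuous_on {x..x + h} f"
        by (rule continuous_at_imp_continuous_on) (use h in \<open>auto intro!: DERIV_isCont der\<close>)
      show "f differentiable (at z)" if "x < z" "z < x + h" for z
        using der[of z] that h real_differentiable_def by auto
    qed
    then obtain l z where z: "x < z" "z < x + h" "DERIV f z :> l" "f (x + h) - f x = h * l" by auto
    have "l = f' z" using DERIV_unique[OF z(3) der[of z]] z h by auto
    moreover have "f' z > 0" using d'(2)[of "z - x"] z h f0 by auto
    ultimately have "h * l > 0" using h by simp
    then have "f (x + h) > f x" using z by simp
    with mx[of "x + h"] h show False by auto
  qed
qed

lemma time_max:
  fixes g :: "real \<Rightarrow> real"
  assumes d: "0 < \<delta>" and der: "(g has_real_derivative g') (at t)"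
    and mx: "\<And>s. t - \<delta> < s \<Longrightarrow> s \<le> t \<Longrightarrow> g s \<le> g t"
  shows "g' \<ge> 0"
proof (rule ccontr)
  assume "\<not> g' \<ge> 0"
  then have "g' < 0" by simp
  from DERIV_neg_dec_left[OF der this] obtain d' where d': "d' > 0" "\<And>h. h > 0 \<Longrightarrow> h < d' \<Longrightarrow> g t < g (t - h)"
    by auto
  define h where "h = min d' \<delta> / 2"
  have h: "0 < h" "h < d'" "h < \<delta>" using d d' by (auto simp: h_def)
  show False using d'(2)[OF h(1,2)] mx[of "t - h"] h by auto
qed

lemma maxprin:
  fixes y yt yx yxx P Pt Px Pxx :: "real \<Rightarrow> real \<Rightarrow> real"
  assumes pde: "\<forall>x\<in>{0<..<1}. \<forall>t\<in>{0<..<T}.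
           ((\<lambda>s. y x s) has_real_derivative yt x t) (at t) \<and>
           ((\<lambda>z. y z t) has_real_derivative yx x t) (at x) \<and>
           ((\<lambda>z. yx z t) has_real_derivative yxx x t) (at x) \<and>
           yt x t - eps * yxx x t + M * yx x t = 0"
  and Pder: "\<And>x t. x\<in>{0<..<1} \<Longrightarrow> t\<in>{0<..<T} \<Longrightarrow>
           ((\<lambda>s. P x s) has_real_derivative Pt x t) (at t) \<and>
           ((\<lambda>z. P z t) has_real_derivative Px x t) (at x) \<and>
           ((\<lambda>z. Px z t) has_real_derivative Pxx x t) (at x) \<and>
           Pt x t - eps * Pxx x t + M * Px x t > 0"
  and ycont: "continuous_on ({0..1} \<times> {0..T} - {(0, 0), (1, 0)}) (\<lambda>(x, t). y x t)"
  and Pcont: "continuous_on ({0..1} \<times> {0..T}) (\<lambda>(x, t). P x t)"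
  and yB: "\<And>x t. x\<in>{0..1} \<Longrightarrow> t\<in>{0..T} \<Longrightarrow> y x t \<le> B"
  and corner: "\<And>x t. x\<in>{0..1} \<Longrightarrow> t\<in>{0..T} \<Longrightarrow> t \<le> \<sigma> \<Longrightarrow> x \<le> \<rho> \<or> 1 - \<rho> \<le> x \<Longrightarrow> B \<le> P x t"
  and side: "\<And>t. t\<in>{0<..<T} \<Longrightarrow> y 0 t = 0 \<and> y 1 t = 0"
  and Pside: "\<And>t. t\<in>{0<..<T} \<Longrightarrow> 0 \<le> P 0 t \<and> 0 \<le> P 1 t"
  and bottom: "\<And>x. x\<in>{0<..<1} \<Longrightarrow> y x 0 \<le> P x 0"
  and eps: "0 < eps" and rs: "0 < \<rho>" "0 < \<sigma>"
  and x1: "x1 \<in> {0..1}" and t1: "0 < t1" "t1 < T"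
  shows "y x1 t1 \<le> P x1 t1"
proof (rule ccontr)
  assume neg: "\<not> y x1 t1 \<le> P x1 t1"
  define inbox where "inbox x t \<longleftrightarrow> t \<le> \<sigma> \<and> (x \<le> \<rho> \<or> 1 - \<rho> \<le> x)" for x t
  have inb: "y x t \<le> P x t" if "x\<in>{0..1}" "t\<in>{0..T}" "inbox x t" for x t
    using yB[OF that(1,2)] corner[OF that(1,2)] that(3) unfolding inbox_def by force
  have nb1: "\<not> inbox x1 t1" using inb[OF x1 _] t1 neg by auto
  define S where "S = {0..1::real} \<times> {0..t1} - ({..<\<rho>} \<times> {..<\<sigma>} \<union> {1-\<rho><..} \<times> {..<\<sigma>})"
  have cS: "compact S" unfolding S_def
    by (intro compact_diff compact_Times compact_Icc open_Un open_Times open_lessThan open_greaterThan)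
  have Ssub: "S \<subseteq> {0..1} \<times> {0..T} - {(0, 0), (1, 0)}"
    unfolding S_def using rs t1 by auto
  have Ssub2: "S \<subseteq> {0..1} \<times> {0..T}" using Ssub by auto
  define v where "v = (\<lambda>p::real\<times>real. y (fst p) (snd p) - P (fst p) (snd p))"
  have vc: "continuous_on S v"
  proof -
    have "continuous_on S (\<lambda>(x, t). y x t)" by (rule continuous_on_subset[OF ycont Ssub])
    moreover have "continuous_on S (\<lambda>(x, t). P x t)" by (rule continuous_on_subset[OF Pcont Ssub2])
    ultimately have "continuous_on S (\<lambda>p. (\<lambda>(x, t). y x t) p - (\<lambda>(x, t). P x t) p)"
      by (rule continuous_on_diff)
    then show ?thesis unfolding v_def by (simp add: case_prod_beta)
  qed
  have p1S: "(x1, t1) \<in> S" using nb1 x1 t1 unfolding S_def inbox_def by auto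
  obtain p where pS: "p \<in> S" and pmax: "\<And>q. q \<in> S \<Longrightarrow> v q \<le> v p"
    using continuous_attains_sup[OF cS _ vc] p1S by blast
  obtain xm tm where p: "p = (xm, tm)" by (cases p)
  have vpos: "v p > 0" using pmax[OF p1S] neg unfolding v_def by auto
  have xm: "0 \<le> xm" "xm \<le> 1" and tm: "0 \<le> tm" "tm \<le> t1" using pS p unfolding S_def by auto
  have notbox: "\<not> inbox xm tm"
    using inb[of xm tm] xm tm t1 vpos p unfolding v_def by auto
  have xm0: "xm \<noteq> 0"
  proof
    assume "xm = 0"
    then have "tm > \<sigma>" using notbox rs unfolding inbox_def by auto
    then have "tm \<in> {0<..<T}" using tm t1 rs by auto
    then show False using side Pside vpos p \<open>xm = 0\<close> unfolding v_def by force
  qed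
  have xm1: "xm \<noteq> 1"
  proof
    assume "xm = 1"
    then have "tm > \<sigma>" using notbox rs unfolding inbox_def by auto
    then have "tm \<in> {0<..<T}" using tm t1 rs by auto
    then show False using side Pside vpos p \<open>xm = 1\<close> unfolding v_def by force
  qed
  have tm0: "tm \<noteq> 0"
  proof
    assume "tm = 0"
    then have "xm \<in> {0<..<1}" using notbox rs unfolding inbox_def by auto
    then show False using bottom vpos p \<open>tm = 0\<close> unfolding v_def by force
  qed
  have xmI: "xm \<in> {0<..<1}" using xm xm0 xm1 by auto
  have tmI: "tm \<in> {0<..<T}" using tm tm0 t1 by auto
  note yd = pde[rule_format, OF xmI tmI]
  note Pd = Pder[OF xmI tmI]
  define dx where "dx = (if \<sigma> \<le> tm then min xm (1 - xm) else min (xm - \<rho>) (1 - \<rho> - xm))"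
  have dx: "dx > 0" using xmI notbox unfolding dx_def inbox_def by auto
  have dxS: "(z, tm) \<in> S \<and> z \<in> {0<..<1}" if "\<bar>z - xm\<bar> < dx" for z
  proof (cases "\<sigma> \<le> tm")
    case True
    then show ?thesis using that tm unfolding dx_def S_def by (auto simp: abs_less_iff)
  next
    case False
    then show ?thesis using that tm rs unfolding dx_def S_def by (auto simp: abs_less_iff)
  qed
  have spc: "yx xm tm - Px xm tm = 0 \<and> yxx xm tm - Pxx xm tm \<le> 0"
  proof (rule second_deriv_max[OF dx, where f = "\<lambda>z. y z tm - P z tm" and f' = "\<lambda>z. yx z tm - Px z tm"])
    fix z assume z: "\<bar>z - xm\<bar> < dx"
    have zI: "z \<in> {0<..<1}" using dxS[OF z] by auto
    show "((\<lambda>z. y z tm - P z tm) has_real_derivative yx z tm - Px z tm) (at z)"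
      using pde[rule_format, OF zI tmI] Pder[OF zI tmI] by (intro DERIV_diff) auto
    show "y z tm - P z tm \<le> y xm tm - P xm tm"
      using pmax[of "(z, tm)"] dxS[OF z] p unfolding v_def by auto
  next
    show "((\<lambda>z. yx z tm - Px z tm) has_real_derivative yxx xm tm - Pxx xm tm) (at xm)"
      using yd Pd by (intro DERIV_diff) auto
  qed
  define dt where "dt = (if \<rho> < xm \<and> xm < 1 - \<rho> then tm else tm - \<sigma>)"
  have dt: "dt > 0" using tmI notbox unfolding dt_def inbox_def by auto
  have tim: "yt xm tm - Pt xm tm \<ge> 0"
  proof (rule time_max[OF dt, where g = "\<lambda>s. y xm s - P xm s"])
    show "((\<lambda>s. y xm s - P xm s) has_real_derivative yt xm tm - Pt xm tm) (at tm)"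
      using yd Pd by (intro DERIV_diff) auto
    fix s assume s: "tm - dt < s" "s \<le> tm"
    have "(xm, s) \<in> S"
    proof (cases "\<rho> < xm \<and> xm < 1 - \<rho>")
      case True
      then show ?thesis using s tm xm unfolding dt_def S_def by auto
    next
      case False
      then show ?thesis using s tm xm rs unfolding dt_def S_def by auto
    qed
    then show "y xm s - P xm s \<le> y xm tm - P xm tm"
      using pmax[of "(xm, s)"] p unfolding v_def by auto
  qed
  have "eps * (yxx xm tm - Pxx xm tm) \<le> 0"
    using spc eps by (simp add: mult_nonneg_nonpos)
  then show False using spc tim yd Pd by (auto simp: algebra_simps)
qed




definition gu :: "real \<Rightarrow> real \<Rightarrow> real \<Rightarrow> real \<Rightarrow> real \<Rightarrow> real \<Rightarrow> real" where
  "gu eps M c s x t = - ((x - c - M * t)^2) / (4 * eps * (t + s))"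

definition gauss :: "real \<Rightarrow> real \<Rightarrow> real \<Rightarrow> real \<Rightarrow> real \<Rightarrow> real \<Rightarrow> real" where
  "gauss eps M c s x t = exp (gu eps M c s x t) / sqrt (t + s)"

definition gauss_x :: "real \<Rightarrow> real \<Rightarrow> real \<Rightarrow> real \<Rightarrow> real \<Rightarrow> real \<Rightarrow> real" where
  "gauss_x eps M c s x t = - (x - c - M * t) / (2 * eps * (t + s)) * gauss eps M c s x t"

definition gauss_xx :: "real \<Rightarrow> real \<Rightarrow> real \<Rightarrow> real \<Rightarrow> real \<Rightarrow> real \<Rightarrow> real" where
  "gauss_xx eps M c s x t = (- 1 / (2 * eps * (t + s)) + (x - c - M * t)^2 / (4 * eps^2 * (t + s)^2)) * gauss eps M c s x t"

definition gauss_t :: "real \<Rightarrow> real \<Rightarrow> real \<Rightarrow> real \<Rightarrow> real \<Rightarrow> real \<Rightarrow> real" where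
  "gauss_t eps M c s x t = (M * (x - c - M * t) / (2 * eps * (t + s)) + (x - c - M * t)^2 / (4 * eps * (t + s)^2) - 1 / (2 * (t + s))) * gauss eps M c s x t"

lemma gu_dx:
  assumes "t + s > 0" "eps > 0"
  shows "((\<lambda>z. gu eps M c s z t) has_real_derivative - (x - c - M * t) / (2 * eps * (t + s))) (at x)"
proof -
  obtain \<tau> where s: "s = \<tau> - t" and tp: "\<tau> > 0" using assms by (intro that[of "t + s"]) auto
  show ?thesis unfolding gu_def s using assms tp
    by (auto intro!: derivative_eq_intros simp: field_simps power2_eq_square)
qed

lemma gu_dt:
  assumes "t + s > 0" "eps > 0"
  shows "((\<lambda>r. gu eps M c s x r) has_real_derivative
      M * (x - c - M * t) / (2 * eps * (t + s)) + (x - c - M * t)^2 / (4 * eps * (t + s)^2)) (at t)"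
proof -
  obtain \<tau> where s: "s = \<tau> - t" and tp: "\<tau> > 0" using assms by (intro that[of "t + s"]) auto
  show ?thesis unfolding gu_def s using assms tp
    by (auto intro!: derivative_eq_intros simp: field_simps power2_eq_square)
qed

lemma gauss_dx:
  assumes "t + s > 0" "eps > 0"
  shows "((\<lambda>z. gauss eps M c s z t) has_real_derivative gauss_x eps M c s x t) (at x)"
proof -
  have "((\<lambda>z. exp (gu eps M c s z t) / sqrt (t + s)) has_real_derivative
     exp (gu eps M c s x t) * (- (x - c - M * t) / (2 * eps * (t + s))) / sqrt (t + s)) (at x)"
    by (intro DERIV_cdivide DERIV_fun_exp gu_dx assms)
  then show ?thesis unfolding gauss_x_def gauss_def by (simp add: mult.commute)
qed

lemma gauss_dxx:
  assumes "t + s > 0" "eps > 0"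
  shows "((\<lambda>z. gauss_x eps M c s z t) has_real_derivative gauss_xx eps M c s x t) (at x)"
proof -
  obtain \<tau> where s: "s = \<tau> - t" and tp: "\<tau> > 0" using assms by (intro that[of "t + s"]) auto
  have d1: "((\<lambda>z. - (z - c - M * t) / (2 * eps * (t + s))) has_real_derivative - 1 / (2 * eps * (t + s))) (at x)"
    unfolding s using assms tp by (auto intro!: derivative_eq_intros simp: field_simps)
  have "((\<lambda>z. - (z - c - M * t) / (2 * eps * (t + s)) * gauss eps M c s z t) has_real_derivative
     (- 1 / (2 * eps * (t + s))) * gauss eps M c s x t + (- (x - c - M * t) / (2 * eps * (t + s))) * gauss_x eps M c s x t) (at x)"
    by (rule DERIV_cong[OF DERIV_mult[OF d1 gauss_dx[OF assms]]]) simp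
  moreover have "(- 1 / (2 * eps * (t + s))) * gauss eps M c s x t + (- (x - c - M * t) / (2 * eps * (t + s))) * gauss_x eps M c s x t
     = gauss_xx eps M c s x t"
    unfolding gauss_xx_def gauss_x_def s using assms tp by (simp add: field_simps power2_eq_square)
  ultimately show ?thesis unfolding gauss_x_def[of eps M c s _ t, symmetric] by simp
qed

lemma gauss_dt:
  assumes "t + s > 0" "eps > 0"
  shows "((\<lambda>r. gauss eps M c s x r) has_real_derivative gauss_t eps M c s x t) (at t)"
proof -
  define E where "E = exp (gu eps M c s x t)"
  obtain \<tau> where s: "s = \<tau> - t" and tp: "\<tau> > 0" using assms by (intro that[of "t + s"]) auto
  have d2: "((\<lambda>r. 1 / sqrt (r + s)) has_real_derivative - 1 / (2 * (t + s) * sqrt (t + s))) (at t)"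
    unfolding s using assms tp by (auto intro!: derivative_eq_intros simp: field_simps)
  have "((\<lambda>r. exp (gu eps M c s x r) * (1 / sqrt (r + s))) has_real_derivative
     E * (M * (x - c - M * t) / (2 * eps * (t + s)) + (x - c - M * t)^2 / (4 * eps * (t + s)^2)) * (1 / sqrt (t + s))
     + (- 1 / (2 * (t + s) * sqrt (t + s))) * E) (at t)"
    unfolding E_def by (rule DERIV_mult[OF DERIV_fun_exp[OF gu_dt[OF assms]] d2])
  moreover have "E * (M * (x - c - M * t) / (2 * eps * (t + s)) + (x - c - M * t)^2 / (4 * eps * (t + s)^2)) * (1 / sqrt (t + s))
     + (- 1 / (2 * (t + s) * sqrt (t + s))) * E = gauss_t eps M c s x t"
  proof -
    have sq: "sqrt (t + s) = sqrt \<tau>" using s by simp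
    have tq: "\<tau> = sqrt \<tau> ^ 2" using tp by simp
    define q where "q = sqrt \<tau>"
    have q: "q > 0" "\<tau> = q^2" using tp tq unfolding q_def by auto
    show ?thesis
      unfolding gauss_t_def gauss_def E_def[symmetric] sq q_def[symmetric]
      unfolding s q(2) using q by (simp add: field_simps)
  qed
  ultimately show ?thesis unfolding gauss_def by simp
qed

lemma gauss_L:
  assumes "t + s > 0" "eps > 0"
  shows "gauss_t eps M c s x t - eps * gauss_xx eps M c s x t + M * gauss_x eps M c s x t = 0"
proof -
  define G where "G = gauss eps M c s x t"
  obtain \<tau> where s: "s = \<tau> - t" and tp: "\<tau> > 0" using assms by (intro that[of "t + s"]) auto
  show ?thesis
  unfolding gauss_t_def gauss_xx_def gauss_x_def G_def[symmetric] s using assms tp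
  by (simp add: field_simps power2_eq_square)
qed

lemma gauss_pos: "t + s > 0 \<Longrightarrow> gauss eps M c s x t > 0"
  unfolding gauss_def by simp

lemma gauss_le: "t > 0 \<Longrightarrow> s \<ge> 0 \<Longrightarrow> eps > 0 \<Longrightarrow> gauss eps M c s x t \<le> 1 / sqrt t"
proof -
  assume a: "t > 0" "s \<ge> 0" "eps > 0"
  have "exp (gu eps M c s x t) \<le> 1"
    using a unfolding gu_def by (simp add: divide_nonpos_pos)
  moreover have "sqrt t \<le> sqrt (t + s)" using a by simp
  moreover have "0 < sqrt t" using a by simp
  ultimately show ?thesis unfolding gauss_def using a
    by (intro frac_le) auto
qed

lemma gauss_ge:
  assumes "eps > 0" "\<rho> > 0" "\<bar>x - c - M * t\<bar> \<le> 2 * \<rho>" "\<rho>^2 \<le> t + s" "t + s \<le> 2 * \<rho>^2"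
  shows "gauss eps M c s x t \<ge> exp (- 1 / eps) / (2 * \<rho>)"
proof -
  have "\<rho>^2 > 0" using assms(2) by simp
  then have tp: "t + s > 0" using assms(4) by linarith
  have "(x - c - M * t)^2 \<le> (2 * \<rho>)^2"
    using assms(2,3) by (metis abs_le_square_iff abs_of_nonneg less_imp_le mult_nonneg_nonneg zero_le_numeral)
  then have "(x - c - M * t)^2 / (4 * eps * (t + s)) \<le> (2 * \<rho>)^2 / (4 * eps * \<rho>^2)"
    using assms tp by (intro frac_le) auto
  also have "\<dots> = 1 / eps" using assms by (simp add: power_mult_distrib)
  finally have e: "exp (- 1 / eps) \<le> exp (gu eps M c s x t)" unfolding gu_def by simp
  have "sqrt (t + s) \<le> sqrt (4 * \<rho>^2)" using assms by simp
  also have "\<dots> = 2 * \<rho>" using assms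
    by (simp add: real_sqrt_mult)
  finally have s: "sqrt (t + s) \<le> 2 * \<rho>" .
  show ?thesis unfolding gauss_def
    by (rule frac_le) (use e s tp assms in auto)
qed

lemma gauss_cont:
  assumes "s > 0" "eps > 0"
  shows "continuous_on ({0..1} \<times> {0..T}) (\<lambda>p. gauss eps M c s (fst p) (snd p))"
proof -
  have pos: "snd p + s > 0" if "p \<in> {0..1::real} \<times> {0..T}" for p
    using that assms by (cases p) auto
  show ?thesis
    unfolding gauss_def gu_def
    apply (intro continuous_intros)
    using pos assms apply auto
    done
qed



lemma upper:
  fixes y yt yx yxx :: "real \<Rightarrow> real \<Rightarrow> real"
  assumes pde: "\<forall>x\<in>{0<..<1}. \<forall>t\<in>{0<..<T}.
           ((\<lambda>s. y x s) has_real_derivative yt x t) (at t) \<and>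
           ((\<lambda>z. y z t) has_real_derivative yx x t) (at x) \<and>
           ((\<lambda>z. yx z t) has_real_derivative yxx x t) (at x) \<and>
           yt x t - eps * yxx x t + M * yx x t = 0"
  and ycont: "continuous_on ({0..1} \<times> {0..T} - {(0, 0), (1, 0)}) (\<lambda>(x, t). y x t)"
  and yB: "\<And>x t. x\<in>{0..1} \<Longrightarrow> t\<in>{0..T} \<Longrightarrow> y x t \<le> B0"
  and B0: "B0 \<ge> 0"
  and side: "\<And>t. t\<in>{0<..<T} \<Longrightarrow> y 0 t = 0 \<and> y 1 t = 0"
  and bottom: "\<And>x. x\<in>{0<..<1} \<Longrightarrow> y x 0 \<le> W * exp (lam * x)"
  and eps: "0 < eps" and M: "0 < M" and W: "W \<ge> 0"
  and x1: "x1 \<in> {0..1}" and t1: "0 < t1" "t1 < T"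
  shows "y x1 t1 \<le> W * exp (lam * x1 - lam * (M - eps * lam) * t1)"
proof (rule field_le_epsilon)
  fix \<delta> :: real assume d: "0 < \<delta>"
  define c where "c = M - eps * lam"
  define \<gamma> where "\<gamma> = \<delta> / (2 * (t1 + 1))"
  define K where "K = 8 * B0 * exp (1 / eps) + 1"
  define \<rho> where "\<rho> = min (1 / (M + 1)) (\<delta> * sqrt t1 / K)"
  define A where "A = 2 * \<rho> * B0 * exp (1 / eps)"
  define s where "s = \<rho>^2"
  have K: "K > 0" unfolding K_def using B0 by (simp add: add_nonneg_pos)
  have \<gamma>: "\<gamma> > 0" unfolding \<gamma>_def using d t1 by simp
  have \<rho>: "\<rho> > 0" unfolding \<rho>_def using d t1 M K by auto
  have \<rho>M: "M * \<rho> \<le> 1"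
  proof -
    have "\<rho> \<le> 1 / (M + 1)" unfolding \<rho>_def by simp
    then have "M * \<rho> \<le> M * (1 / (M + 1))" using M by (intro mult_left_mono) auto
    also have "\<dots> \<le> 1" using M by (simp add: divide_le_eq)
    finally show ?thesis .
  qed
  have A0: "A \<ge> 0" unfolding A_def using \<rho> B0 by simp
  have s0: "s > 0" unfolding s_def using \<rho> by simp
  define P where "P x t = W * exp (lam * x - lam * c * t) + \<gamma> * t + A * (gauss eps M 0 s x t + gauss eps M 1 s x t)" for x t
  define Pt where "Pt x t = - lam * c * W * exp (lam * x - lam * c * t) + \<gamma> + A * (gauss_t eps M 0 s x t + gauss_t eps M 1 s x t)" for x t
  define Px where "Px x t = lam * W * exp (lam * x - lam * c * t) + A * (gauss_x eps M 0 s x t + gauss_x eps M 1 s x t)" for x t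
  define Pxx where "Pxx x t = lam * lam * W * exp (lam * x - lam * c * t) + A * (gauss_xx eps M 0 s x t + gauss_xx eps M 1 s x t)" for x t
  have Pder: "((\<lambda>s. P x s) has_real_derivative Pt x t) (at t) \<and>
           ((\<lambda>z. P z t) has_real_derivative Px x t) (at x) \<and>
           ((\<lambda>z. Px z t) has_real_derivative Pxx x t) (at x) \<and>
           Pt x t - eps * Pxx x t + M * Px x t > 0" if "x\<in>{0<..<1}" "t\<in>{0<..<T}" for x t
  proof -
    have ts: "t + s > 0" using that s0 by simp
    note g = gauss_dt[OF ts eps] gauss_dx[OF ts eps] gauss_dxx[OF ts eps] gauss_L[OF ts eps]
    have 1: "((\<lambda>s. P x s) has_real_derivative Pt x t) (at t)"
      unfolding P_def Pt_def
      by (rule DERIV_cong, (rule derivative_eq_intros g refl)+) (simp add: algebra_simps)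
    have 2: "((\<lambda>z. P z t) has_real_derivative Px x t) (at x)"
      unfolding P_def Px_def
      by (rule DERIV_cong, (rule derivative_eq_intros g refl)+) (simp add: algebra_simps)
    have 3: "((\<lambda>z. Px z t) has_real_derivative Pxx x t) (at x)"
      unfolding Px_def Pxx_def
      by (rule DERIV_cong, (rule derivative_eq_intros g refl)+) (simp add: algebra_simps)
    have L0: "gauss_t eps M 0 s x t - eps * gauss_xx eps M 0 s x t + M * gauss_x eps M 0 s x t = 0"
      "gauss_t eps M 1 s x t - eps * gauss_xx eps M 1 s x t + M * gauss_x eps M 1 s x t = 0"
      using g by auto
    have "Pt x t - eps * Pxx x t + M * Px x t
       = W * exp (lam * x - lam * c * t) * (- lam * c - eps * lam * lam + M * lam) + \<gamma>
         + A * (gauss_t eps M 0 s x t - eps * gauss_xx eps M 0 s x t + M * gauss_x eps M 0 s x t)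
         + A * (gauss_t eps M 1 s x t - eps * gauss_xx eps M 1 s x t + M * gauss_x eps M 1 s x t)"
      unfolding Pt_def Pxx_def Px_def by (simp add: algebra_simps)
    also have "\<dots> = \<gamma>" unfolding L0 c_def by (simp add: algebra_simps)
    finally show ?thesis using 1 2 3 \<gamma> by simp
  qed
  have Pcont: "continuous_on ({0..1} \<times> {0..T}) (\<lambda>(x, t). P x t)"
  proof -
    have "continuous_on ({0..1} \<times> {0..T}) (\<lambda>p. P (fst p) (snd p))"
      unfolding P_def by (intro continuous_intros gauss_cont s0 eps)
    then show ?thesis by (simp add: case_prod_beta)
  qed
  have gpos: "gauss eps M c' s x t \<ge> 0" if "t \<ge> 0" for c' x t
    using gauss_pos[of t s] that s0 by (simp add: less_imp_le)
  have corner: "B0 \<le> P x t" if "x\<in>{0..1}" "t\<in>{0..T}" "t \<le> s" "x \<le> \<rho> \<or> 1 - \<rho> \<le> x" for x t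
  proof -
    have Mt: "M * t \<le> \<rho>"
    proof -
      have "M * t \<le> M * \<rho>^2" using that M s_def by simp
      also have "\<dots> = (M * \<rho>) * \<rho>" by (simp add: power2_eq_square)
      also have "\<dots> \<le> \<rho>" using \<rho>M \<rho> by (simp add: mult_left_le_one_le)
      finally show ?thesis .
    qed
    have Mt0: "M * t \<ge> 0" using M that by simp
    have ts: "\<rho>^2 \<le> t + s" "t + s \<le> 2 * \<rho>^2" using that s_def by auto
    have key: "A * gauss eps M 0 s x t \<ge> B0 \<or> A * gauss eps M 1 s x t \<ge> B0"
    proof -
      have AB: "A * (exp (- 1 / eps) / (2 * \<rho>)) = B0"
        unfolding A_def using \<rho> by (simp add: exp_minus field_simps)
      show ?thesis
      proof (cases "x \<le> \<rho>")
        case True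
        have xb: "\<bar>x - 0 - M * t\<bar> \<le> 2 * \<rho>" using True Mt Mt0 that \<rho> by auto
        have "A * gauss eps M 0 s x t \<ge> A * (exp (- 1 / eps) / (2 * \<rho>))"
          by (rule mult_left_mono[OF gauss_ge[OF eps \<rho> xb ts] A0])
        then show ?thesis using AB by simp
      next
        case False
        then have "1 - \<rho> \<le> x" using that by auto
        then have xb: "\<bar>x - 1 - M * t\<bar> \<le> 2 * \<rho>" using Mt Mt0 that \<rho> by auto
        have "A * gauss eps M 1 s x t \<ge> A * (exp (- 1 / eps) / (2 * \<rho>))"
          by (rule mult_left_mono[OF gauss_ge[OF eps \<rho> xb ts] A0])
        then show ?thesis using AB by simp
      qed
    qed
    have "A * gauss eps M 0 s x t \<ge> 0" "A * gauss eps M 1 s x t \<ge> 0" "\<gamma> * t \<ge> 0" "W * exp (lam * x - lam * c * t) \<ge> 0"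
      using A0 gpos[of t] that \<gamma> W by auto
    then show ?thesis using key unfolding P_def by (auto simp: algebra_simps)
  qed
  have Pside: "0 \<le> P 0 t \<and> 0 \<le> P 1 t" if "t\<in>{0<..<T}" for t
    unfolding P_def using A0 gpos[of t] that \<gamma> W by auto
  have bot: "y x 0 \<le> P x 0" if "x\<in>{0<..<1}" for x
  proof -
    have "A * (gauss eps M 0 s x 0 + gauss eps M 1 s x 0) \<ge> 0" using A0 gpos[of 0] by auto
    then show ?thesis using bottom[OF that] unfolding P_def by auto
  qed
  have main: "y x1 t1 \<le> P x1 t1"
    by (rule maxprin[OF pde Pder ycont Pcont yB corner side Pside bot eps \<rho> s0 x1 t1]) auto
  have "P x1 t1 \<le> W * exp (lam * x1 - lam * c * t1) + \<gamma> * t1 + A * (1 / sqrt t1 + 1 / sqrt t1)"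
    unfolding P_def using gauss_le[OF t1(1) _ eps] s0 A0
    by (intro add_mono order.refl mult_left_mono) auto
  also have "\<gamma> * t1 \<le> \<delta> / 2"
    unfolding \<gamma>_def using d t1 by (simp add: field_simps)
  also have "A * (1 / sqrt t1 + 1 / sqrt t1) \<le> \<delta> / 2"
  proof -
    have rl: "\<rho> \<le> \<delta> * sqrt t1 / K" unfolding \<rho>_def by simp
    have "(2 * B0 * exp (1 / eps)) * \<rho> \<le> (2 * B0 * exp (1 / eps)) * (\<delta> * sqrt t1 / K)"
      by (rule mult_left_mono[OF rl]) (use B0 in simp)
    then have "A \<le> (2 * B0 * exp (1 / eps)) * (\<delta> * sqrt t1 / K)"
      unfolding A_def by (simp add: algebra_simps)
    also have "\<dots> = \<delta> * sqrt t1 * (2 * B0 * exp (1 / eps) / K)" by simp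
    also have "\<dots> \<le> \<delta> * sqrt t1 * (1 / 4)"
    proof -
      have "2 * B0 * exp (1 / eps) / K \<le> 1 / 4" unfolding K_def using B0 K_def K
        by (simp add: divide_le_eq)
      then show ?thesis using d t1 by (intro mult_left_mono) auto
    qed
    finally have "A \<le> \<delta> * sqrt t1 / 4" by simp
    moreover have "A * (1 / sqrt t1 + 1 / sqrt t1) = 2 * A / sqrt t1" by simp
    ultimately show ?thesis using t1 by (simp add: divide_le_eq)
  qed
  finally show "y x1 t1 \<le> W * exp (lam * x1 - lam * (M - eps * lam) * t1) + \<delta>"
    using main unfolding c_def by simp
qed




lemma pointwise_open:
  assumes sol: "adv_diff_solution M T eps y0 y" and eps: "eps > 0" and M: "M > 0" and W: "W \<ge> 0"
    and bot: "\<And>x. x\<in>{0<..<1} \<Longrightarrow> \<bar>y0 x\<bar> \<le> W * exp (lam * x)"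
    and x1: "x1 \<in> {0..1}" and t1: "0 < t1" "t1 < T"
  shows "\<bar>y x1 t1\<bar> \<le> W * exp (lam * x1 - lam * (M - eps * lam) * t1)"
proof -
  obtain yt yx yxx where pde: "\<forall>x\<in>{0<..<1}. \<forall>t\<in>{0<..<T}.
           ((\<lambda>s. y x s) has_real_derivative yt x t) (at t) \<and>
           ((\<lambda>z. y z t) has_real_derivative yx x t) (at x) \<and>
           ((\<lambda>z. yx z t) has_real_derivative yxx x t) (at x) \<and>
           yt x t - eps * yxx x t + M * yx x t = 0"
    using sol unfolding adv_diff_solution_def by blast
  have ycont: "continuous_on ({0..1} \<times> {0..T} - {(0, 0), (1, 0)}) (\<lambda>(x, t). y x t)"
   and bdd: "bounded ((\<lambda>(x, t). y x t) ` ({0..1} \<times> {0..T}))"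
   and side: "\<And>t. t\<in>{0<..<T} \<Longrightarrow> y 0 t = 0 \<and> y 1 t = 0"
   and init: "\<And>x. x\<in>{0<..<1} \<Longrightarrow> y x 0 = y0 x"
    using sol unfolding adv_diff_solution_def by auto
  obtain B where B: "\<And>z. z \<in> (\<lambda>(x, t). y x t) ` ({0..1} \<times> {0..T}) \<Longrightarrow> norm z \<le> B"
    using bdd unfolding bounded_iff by blast
  have yB: "\<bar>y x t\<bar> \<le> B" if "x\<in>{0..1}" "t\<in>{0..T}" for x t
    using B[of "y x t"] that by force
  have "\<bar>y 0 0\<bar> \<le> B" by (rule yB) (use t1 in auto)
  then have B0: "B \<ge> 0" by (rule order_trans[OF abs_ge_zero])
  have up: "y x1 t1 \<le> W * exp (lam * x1 - lam * (M - eps * lam) * t1)"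
    by (rule upper[OF pde ycont _ B0 side _ eps M W x1 t1])
       (use yB bot init in \<open>auto simp: abs_le_iff\<close>)
  have pde': "\<forall>x\<in>{0<..<1}. \<forall>t\<in>{0<..<T}.
           ((\<lambda>s. - y x s) has_real_derivative - yt x t) (at t) \<and>
           ((\<lambda>z. - y z t) has_real_derivative - yx x t) (at x) \<and>
           ((\<lambda>z. - yx z t) has_real_derivative - yxx x t) (at x) \<and>
           - yt x t - eps * - yxx x t + M * - yx x t = 0"
  proof (intro ballI conjI)
    fix x t :: real assume a: "x\<in>{0<..<1}" "t\<in>{0<..<T}"
    note h = pde[rule_format, OF a]
    show "((\<lambda>s. - y x s) has_real_derivative - yt x t) (at t)" using h by (intro DERIV_minus) auto
    show "((\<lambda>z. - y z t) has_real_derivative - yx x t) (at x)" using h by (intro DERIV_minus) auto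
    show "((\<lambda>z. - yx z t) has_real_derivative - yxx x t) (at x)" using h by (intro DERIV_minus) auto
    show "- yt x t - eps * - yxx x t + M * - yx x t = 0" using h by (simp add: algebra_simps)
  qed
  have ycont': "continuous_on ({0..1} \<times> {0..T} - {(0, 0), (1, 0)}) (\<lambda>(x, t). - y x t)"
  proof -
    have "continuous_on ({0..1} \<times> {0..T} - {(0, 0), (1, 0)}) (\<lambda>p. - (\<lambda>(x, t). y x t) p)"
      by (intro continuous_on_minus ycont)
    then show ?thesis by (simp add: case_prod_beta)
  qed
  have lo: "- y x1 t1 \<le> W * exp (lam * x1 - lam * (M - eps * lam) * t1)"
    by (rule upper[OF pde' ycont' _ B0 _ _ eps M W x1 t1])
       (use yB bot init side in \<open>auto simp: abs_le_iff\<close>)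
  show ?thesis using up lo by auto
qed

lemma pointwise:
  assumes sol: "adv_diff_solution M T eps y0 y" and eps: "eps > 0" and M: "M > 0" and W: "W \<ge> 0"
    and bot: "\<And>x. x\<in>{0<..<1} \<Longrightarrow> \<bar>y0 x\<bar> \<le> W * exp (lam * x)"
    and x1: "x1 \<in> {0..1}" and t1: "0 < t1" "t1 \<le> T"
  shows "\<bar>y x1 t1\<bar> \<le> W * exp (lam * x1 - lam * (M - eps * lam) * t1)"
proof (cases "t1 < T")
  case True
  then show ?thesis using pointwise_open[OF assms(1-5) x1 t1(1)] by auto
next
  case False
  then have tT: "t1 = T" using t1 by auto
  have T0: "T > 0" using t1 tT by auto
  have ycont: "continuous_on ({0..1} \<times> {0..T} - {(0, 0), (1, 0)}) (\<lambda>(x, t). y x t)"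
    using sol unfolding adv_diff_solution_def by auto
  have c1: "continuous_on {T/2..T} (\<lambda>t. y x1 t)"
  proof -
    have "continuous_on {T/2..T} (\<lambda>t. (\<lambda>(x, t). y x t) ((\<lambda>t. (x1, t)) t))"
      by (rule continuous_on_compose2[OF ycont]) (use x1 T0 in \<open>auto intro!: continuous_intros\<close>)
    then show ?thesis by simp
  qed
  have "((\<lambda>t. y x1 t) \<longlongrightarrow> y x1 T) (at T within {T/2..T})"
    using c1 T0 unfolding continuous_on_def by auto
  then have lim1: "((\<lambda>t. \<bar>y x1 t\<bar>) \<longlongrightarrow> \<bar>y x1 T\<bar>) (at_left T)"
    using at_within_Icc_at_left[of "T/2" T] T0 by (auto intro: tendsto_rabs)
  have lim2: "((\<lambda>t. W * exp (lam * x1 - lam * (M - eps * lam) * t)) \<longlongrightarrow> W * exp (lam * x1 - lam * (M - eps * lam) * T)) (at_left T)"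
    by (intro tendsto_intros)
  have ev: "eventually (\<lambda>t. \<bar>y x1 t\<bar> \<le> W * exp (lam * x1 - lam * (M - eps * lam) * t)) (at_left T)"
    using eventually_at_left_real[OF T0]
    by (rule eventually_mono) (use pointwise_open[OF assms(1-5) x1] in auto)
  show ?thesis unfolding tT
    by (rule tendsto_le[OF _ lim2 lim1 ev]) simp
qed




lemma pow_exp_bounds:
  fixes v :: real assumes "v \<ge> 0"
  shows "v \<le> exp v" "v^2 \<le> 4 * exp v" "v^3 \<le> 27 * exp v"
proof -
  show "v \<le> exp v" using exp_ge_add_one_self[of v] by linarith
  have h2: "v / 2 \<le> exp (v / 2)" using exp_ge_add_one_self[of "v/2"] by linarith
  have "(v / 2)^2 \<le> (exp (v / 2))^2" using h2 assms by (intro power_mono) auto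
  also have "\<dots> = exp v" by (simp add: power2_eq_square mult_exp_exp)
  finally show "v^2 \<le> 4 * exp v" by (simp add: power_divide)
  have h3: "v / 3 \<le> exp (v / 3)" using exp_ge_add_one_self[of "v/3"] by linarith
  have "(v / 3)^3 \<le> (exp (v / 3))^3" using h3 assms by (intro power_mono) auto
  also have "\<dots> = exp v" by (simp add: power3_eq_cube mult_exp_exp)
  finally show "v^3 \<le> 27 * exp v" by (simp add: power_divide)
qed

lemma final_arith:
  fixes a0 a1 a2 K u r E :: real
  assumes "a0 \<ge> 0" "a1 \<ge> 0" "a2 \<ge> 0" "K \<ge> 0" "u > 0" "r > 0" "r < 1" "E > 0"
  shows "E * r * (a0 + a1 * (r^2 * u) + 2 * a2 * (r^2 * u)^2 + 5 * K * (r^2 * u)^3)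
    \<le> E * (1 + u + 2 * u^2) * (a0 * r + a1 * r^3 + a2 * r^5) + E * (5 * K + 1) * u^3 * r^6"
proof -
  have f: "1 + u + 2 * u^2 \<ge> 1" "1 + u + 2 * u^2 \<ge> u" "1 + u + 2 * u^2 \<ge> 2 * u^2" using assms by auto
  have t0: "a0 * r \<le> (1 + u + 2 * u^2) * (a0 * r)"
    using mult_right_mono[OF f(1), of "a0 * r"] assms by simp
  have t1: "a1 * (r^2 * u) * r \<le> (1 + u + 2 * u^2) * (a1 * r^3)"
    using mult_right_mono[OF f(2), of "a1 * r^3"] assms by (simp add: power3_eq_cube power2_eq_square algebra_simps)
  have t2: "2 * a2 * (r^2 * u)^2 * r \<le> (1 + u + 2 * u^2) * (a2 * r^5)"
    using mult_right_mono[OF f(3), of "a2 * r^5"] assms by (simp add: power2_eq_square algebra_simps eval_nat_numeral)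
  have r76: "r^7 \<le> r^6" using assms by (simp add: power_decreasing)
  have t3: "5 * K * (r^2 * u)^3 * r \<le> (5 * K + 1) * u^3 * r^6"
  proof -
    have "5 * K * (r^2 * u)^3 * r = (5 * K * u^3) * r^7" by (simp add: algebra_simps eval_nat_numeral)
    also have "\<dots> \<le> (5 * K * u^3) * r^6" using r76 assms by (intro mult_left_mono) auto
    also have "\<dots> \<le> (5 * K + 1) * u^3 * r^6" using assms by (intro mult_right_mono) auto
    finally show ?thesis .
  qed
  have "r * (a0 + a1 * (r^2 * u) + 2 * a2 * (r^2 * u)^2 + 5 * K * (r^2 * u)^3)
    \<le> (1 + u + 2 * u^2) * (a0 * r + a1 * r^3 + a2 * r^5) + (5 * K + 1) * u^3 * r^6"
    using t0 t1 t2 t3 by (simp add: algebra_simps)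
  then have "E * (r * (a0 + a1 * (r^2 * u) + 2 * a2 * (r^2 * u)^2 + 5 * K * (r^2 * u)^3))
    \<le> E * ((1 + u + 2 * u^2) * (a0 * r + a1 * r^3 + a2 * r^5) + (5 * K + 1) * u^3 * r^6)"
    using assms by (intro mult_left_mono) auto
  then show ?thesis by (simp add: algebra_simps)
qed

theorem proposition5p1:
  fixes M T :: real and y0 :: "real \<Rightarrow> real" and D :: "nat \<Rightarrow> real \<Rightarrow> real"
  assumes "M > 0" and "T \<ge> 1 / M" and "C4_on_unit y0 D"
  shows "\<exists>C>0. \<exists>C'>0. \<exists>eps0>0. \<forall>eps y.
           0 < eps \<and> eps < eps0 \<and> eps < 1 \<and> adv_diff_solution M T eps y0 y \<longrightarrow>
           L2_norm_unit (\<lambda>x. y x (1 / M))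
             \<le> C * (\<bar>y0 0\<bar> * eps powr (1/4) + \<bar>D 1 0\<bar> * eps powr (3/4)
                    + \<bar>D 2 0\<bar> * eps powr (5/4)) + C' * eps powr (3/2)"
proof -
  have M: "M > 0" using assms by simp
  obtain K where K0: "K \<ge> 0" and Kb: "\<And>x. x\<in>{0..1} \<Longrightarrow> \<bar>y0 x\<bar> \<le> \<bar>y0 0\<bar> + \<bar>D 1 0\<bar> * x + \<bar>D 2 0\<bar> * x^2/2 + K * x^3/6"
    using taylor3[OF assms(3)] by blast
  define a0 where "a0 = \<bar>y0 0\<bar>"
  define a1 where "a1 = \<bar>D 1 0\<bar>"
  define a2 where "a2 = \<bar>D 2 0\<bar>"
  have a: "a0 \<ge> 0" "a1 \<ge> 0" "a2 \<ge> 0" unfolding a0_def a1_def a2_def by auto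
  define q where "q = M powr (1/4)"
  have q0: "q > 0" unfolding q_def using M by simp
  have q4: "q^4 = M"
  proof -
    have "q^4 = q powr (real 4)" using q0 by (simp add: powr_realpow)
    also have "\<dots> = M" unfolding q_def using M by (simp add: powr_powr)
    finally show ?thesis .
  qed
  define u where "u = 1 / q^2"
  define E where "E = exp 1 / q"
  have u0: "u > 0" and E0: "E > 0" unfolding u_def E_def using q0 by auto
  define C where "C = E * (1 + u + 2 * u^2)"
  define C' where "C' = E * (5 * K + 1) * u^3"
  have C0: "C > 0" unfolding C_def using E0 u0 by (simp add: add_pos_nonneg)
  have C'0: "C' > 0" unfolding C'_def using E0 u0 K0 by (simp add: add_nonneg_pos)
  show ?thesis
  proof (rule exI[of _ C], rule conjI[OF C0], rule exI[of _ C'], rule conjI[OF C'0],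
      rule exI[of _ "1::real"], rule conjI[OF zero_less_one], intro allI impI)
    fix eps :: real and y :: "real \<Rightarrow> real \<Rightarrow> real"
    assume h: "0 < eps \<and> eps < 1 \<and> eps < 1 \<and> adv_diff_solution M T eps y0 y"
    then have eps: "eps > 0" "eps < 1" and sol: "adv_diff_solution M T eps y0 y" by auto
    define r where "r = eps powr (1/4)"
    have r0: "r > 0" unfolding r_def using eps by simp
    have r1: "r < 1" unfolding r_def using eps powr_less_mono2[of "1/4" eps 1] by simp
    have rpow: "r^k = eps powr (real k / 4)" for k :: nat
    proof -
      have "r^k = r powr (real k)" using r0 by (simp add: powr_realpow)
      also have "\<dots> = eps powr (real k / 4)" unfolding r_def using eps by (simp add: powr_powr)
      finally show ?thesis .
    qed
    have r4: "r^4 = eps" using rpow[of 4] eps by simp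
    define lam where "lam = q^2 / r^2"
    have lam0: "lam > 0" unfolding lam_def using q0 r0 by simp
    have ilam: "1 / lam = r^2 * u" unfolding lam_def u_def by simp
    have epslam: "eps * lam^2 = M"
      unfolding lam_def r4[symmetric] q4[symmetric] using r0 q0 by (simp add: field_simps eval_nat_numeral)
    define \<rho> where "\<rho> = r^2 * u"
    have \<rho>0: "\<rho> > 0" unfolding \<rho>_def using r0 u0 by simp
    define W where "W = a0 + a1 * \<rho> + 2 * a2 * \<rho>^2 + 5 * K * \<rho>^3"
    have W0: "W \<ge> 0" unfolding W_def using a K0 \<rho>0 by simp
    have bot: "\<bar>y0 x\<bar> \<le> W * exp (lam * x)" if x: "x\<in>{0<..<1}" for x
    proof -
      define v where "v = lam * x"
      have v0: "v \<ge> 0" unfolding v_def using lam0 x by simp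
      have xv: "x = \<rho> * v" unfolding v_def \<rho>_def ilam[symmetric] using lam0 by simp
      note pb = pow_exp_bounds[OF v0]
      have "(a1 * \<rho>) * v \<le> (a1 * \<rho>) * exp v"
        by (rule mult_left_mono[OF pb(1)]) (use a \<rho>0 in simp)
      then have e1: "a1 * x \<le> a1 * \<rho> * exp v"
        by (simp add: xv mult.assoc)
      have e2: "a2 * x^2 / 2 \<le> 2 * a2 * \<rho>^2 * exp v"
      proof -
        have "a2 * x^2 / 2 = (a2 * \<rho>^2 / 2) * v^2" unfolding xv by (simp add: power_mult_distrib)
        also have "\<dots> \<le> (a2 * \<rho>^2 / 2) * (4 * exp v)" using pb(2) a by (intro mult_left_mono) auto
        finally show ?thesis by (simp add: mult_ac)
      qed
      have e3: "K * x^3 / 6 \<le> 5 * (K * \<rho>^3 * exp v)"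
      proof -
        have Z: "K * \<rho>^3 * exp v \<ge> 0" using K0 \<rho>0 by simp
        have "K * x^3 / 6 = (K * \<rho>^3 / 6) * v^3" unfolding xv by (simp add: power_mult_distrib)
        also have "\<dots> \<le> (K * \<rho>^3 / 6) * (27 * exp v)" using pb(3) K0 \<rho>0 by (intro mult_left_mono) auto
        also have "\<dots> = (9/2) * (K * \<rho>^3 * exp v)" by (simp add: algebra_simps)
        also have "\<dots> \<le> 5 * (K * \<rho>^3 * exp v)" using Z by linarith
        finally show ?thesis .
      qed
      have e0: "a0 \<le> a0 * exp v" using mult_left_mono[of 1 "exp v" a0] a v0 by simp
      have "\<bar>y0 x\<bar> \<le> a0 + a1 * x + a2 * x^2/2 + K * x^3/6"
        using Kb[of x] x unfolding a0_def a1_def a2_def by auto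
      also have "\<dots> \<le> W * exp v" using e0 e1 e2 e3 unfolding W_def by (simp add: algebra_simps)
      finally show ?thesis unfolding v_def .
    qed
    define m where "m = 1 / M"
    have m0: "m > 0" "m \<le> T" unfolding m_def using M assms(2) by auto
    have expo: "lam * x - lam * (M - eps * lam) * m = 1 + lam * (x - 1)" for x
    proof -
      have "lam * (M - eps * lam) * m = lam - eps * lam^2 / M" unfolding m_def using M
        by (simp add: field_simps power2_eq_square)
      also have "\<dots> = lam - 1" using epslam M by simp
      finally show ?thesis by (simp add: algebra_simps)
    qed
    define g where "g x = W * exp 1 * exp (lam * (x - 1))" for x
    have pw: "\<bar>y x m\<bar> \<le> g x" if "x \<in> {0..1}" for x
      using pointwise[OF sol eps(1) M W0 bot that m0] unfolding expo g_def
      by (simp add: mult_exp_exp mult.assoc)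
    have ycont: "continuous_on ({0..1} \<times> {0..T} - {(0, 0), (1, 0)}) (\<lambda>(x, t). y x t)"
      using sol unfolding adv_diff_solution_def by auto
    have cy: "continuous_on {0..1} (\<lambda>x. y x m)"
    proof -
      have "continuous_on {0..1} (\<lambda>x. (\<lambda>(x, t). y x t) ((\<lambda>x. (x, m)) x))"
        by (rule continuous_on_compose2[OF ycont]) (use m0 in \<open>auto intro!: continuous_intros\<close>)
      then show ?thesis by simp
    qed
    have FTC: "((\<lambda>x. exp (2 * lam * (x - 1))) has_integral
        (exp (2 * lam * (1 - 1)) / (2 * lam) - exp (2 * lam * (0 - 1)) / (2 * lam))) {0..1}"
    proof (rule fundamental_theorem_of_calculus)
      show "(0::real) \<le> 1" by simp
      fix x :: real assume "x \<in> {0..1}"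
      show "((\<lambda>x. exp (2 * lam * (x - 1)) / (2 * lam)) has_vector_derivative exp (2 * lam * (x - 1))) (at x within {0..1})"
        unfolding has_real_derivative_iff_has_vector_derivative[symmetric]
        using lam0 by (auto intro!: derivative_eq_intros)
    qed
    define I where "I = exp (2 * lam * (1 - 1)) / (2 * lam) - exp (2 * lam * (0 - 1)) / (2 * lam)"
    have I: "I \<le> r^2 * u"
    proof -
      have "I \<le> 1 / (2 * lam)" unfolding I_def using lam0 by (simp add: divide_right_mono)
      also have "\<dots> \<le> 1 / lam" using lam0 by (simp add: frac_le)
      finally show ?thesis using ilam by simp
    qed
    have FTC2: "((\<lambda>x. (W * exp 1)^2 * exp (2 * lam * (x - 1))) has_integral ((W * exp 1)^2 * I)) {0..1}"
      unfolding I_def by (intro has_integral_mult_right FTC)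
    have gsq: "(g x)^2 = (W * exp 1)^2 * exp (2 * lam * (x - 1))" for x
    proof -
      have "(exp (lam * (x - 1)))^2 = exp (2 * lam * (x - 1))"
        by (simp add: power2_eq_square mult_exp_exp)
      then show ?thesis unfolding g_def by (simp add: power_mult_distrib)
    qed
    have int_le: "integral {0..1} (\<lambda>x. (y x m)^2) \<le> (W * exp 1)^2 * I"
    proof -
      have "integral {0..1} (\<lambda>x. (y x m)^2) \<le> integral {0..1} (\<lambda>x. (W * exp 1)^2 * exp (2 * lam * (x - 1)))"
      proof (rule integral_le)
        show "(\<lambda>x. (y x m)^2) integrable_on {0..1}"
          by (intro integrable_continuous_interval continuous_intros cy)
        show "(\<lambda>x. (W * exp 1)^2 * exp (2 * lam * (x - 1))) integrable_on {0..1}"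
          using FTC2 by blast
        fix x :: real assume x: "x \<in> {0..1}"
        have "(y x m)^2 = \<bar>y x m\<bar>^2" by simp
        also have "\<dots> \<le> (g x)^2" using pw[OF x] by (intro power_mono) auto
        finally show "(y x m)^2 \<le> (W * exp 1)^2 * exp (2 * lam * (x - 1))" using gsq by simp
      qed
      also have "\<dots> = (W * exp 1)^2 * I" using FTC2 by (rule integral_unique)
      finally show ?thesis .
    qed
    have "(W * exp 1)^2 * I \<le> (W * exp 1)^2 * (r^2 * u)" using I by (intro mult_left_mono) auto
    also have "\<dots> = (E * r * W)^2" unfolding E_def u_def using q0 by (simp add: field_simps power_mult_distrib)
    finally have "integral {0..1} (\<lambda>x. (y x m)^2) \<le> (E * r * W)^2" using int_le by linarith
    then have L2: "L2_norm_unit (\<lambda>x. y x m) \<le> E * r * W"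
      unfolding L2_norm_unit_def using E0 r0 W0
      by (metis real_sqrt_abs real_sqrt_le_mono abs_of_nonneg mult_nonneg_nonneg less_imp_le)
    have fa: "E * r * W \<le> E * (1 + u + 2 * u^2) * (a0 * r + a1 * r^3 + a2 * r^5) + E * (5 * K + 1) * u^3 * r^6"
      unfolding W_def \<rho>_def using final_arith[OF a K0 u0 r0 r1 E0] by simp
    have pw': "r = eps powr (1/4)" "r^3 = eps powr (3/4)" "r^5 = eps powr (5/4)" "r^6 = eps powr (3/2)"
      using rpow[of 1] rpow[of 3] rpow[of 5] rpow[of 6] by auto
    show "L2_norm_unit (\<lambda>x. y x (1 / M))
             \<le> C * (\<bar>y0 0\<bar> * eps powr (1/4) + \<bar>D 1 0\<bar> * eps powr (3/4)
                    + \<bar>D 2 0\<bar> * eps powr (5/4)) + C' * eps powr (3/2)"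
      using L2 fa unfolding m_def C_def C'_def a0_def[symmetric] a1_def[symmetric] a2_def[symmetric] pw'[symmetric]
      by (simp add: algebra_simps)
  qed
qed


end
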